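(* Let $(X_t)_{t\in\mathbb{N}}$ be i.i.d. real random variables on a probability space $(\Omega,\mathcal{F},\mathbb{P})$ with $\mathbb{E}[|X_1|]<\infty$ and $\mathbb{E}[X_1]=0$, and define $r(K)=\mathbb{E}\big[|X_1|\mathbf{1}_{\{|X_1|>K\}}\big]$ for $K\ge0$. Then for all $\varepsilon>0$, $\gamma>0$ and $K\ge1$, $$\mathbb{P}\Big(\sup_{t\in\mathbb{N}}\frac{1}{\gamma+t}\Big|\sum_{s=1}^tX_s\Big| > \varepsilon + r(K)\Big) \le \frac{8K^2}{\gamma\varepsilon^2} + \Big(\frac{16}{\varepsilon^2}+2\Big)r(K).$$ *)

theory Defs
  imports "HOL-Probability.Probability"
begin

definition tail_mass :: "'a measure \<Rightarrow> ('a \<Rightarrow> real) \<Rightarrow> real \<Rightarrow> real" where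
  "tail_mass M Y K = (\<integral>\<omega>. \<bar>Y \<omega>\<bar> * indicator {\<omega>. \<bar>Y \<omega>\<bar> > K} \<omega> \<partial>M)"

end

theory Submission
  imports Defs
begin


lemma key_ineq: fixes a :: real assumes "a > 0" shows "(1/(a+1))\<^sup>2 \<le> 1/a - 1/(a+1)"
proof -
  have e: "1/a - 1/(a+1) = 1/(a*(a+1))" using assms by (simp add: field_simps)
  have "(1/(a+1))\<^sup>2 = 1/((a+1)*(a+1))" by (simp add: power2_eq_square)
  also have "\<dots> \<le> 1/(a*(a+1))" using assms by (intro divide_left_mono mult_right_mono) auto
  finally show ?thesis using e by simp
qed

lemma R2: fixes \<gamma> :: real assumes "\<gamma> > 0"
  shows "(\<Sum>i=1..n. (1/(\<gamma> + real i))\<^sup>2) \<le> 1/\<gamma> - 1/(\<gamma> + real n)"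
proof (induction n)
  case 0 then show ?case by simp
next
  case (Suc n)
  have a: "\<gamma> + real n > 0" using assms by simp
  have e: "\<gamma> + real (Suc n) = (\<gamma> + real n) + 1" by simp
  have k: "(1/(\<gamma> + real (Suc n)))\<^sup>2 \<le> 1/(\<gamma> + real n) - 1/(\<gamma> + real (Suc n))"
    unfolding e by (rule key_ineq[OF a])
  have s: "(\<Sum>i=1..Suc n. (1/(\<gamma> + real i))\<^sup>2) = (\<Sum>i=1..n. (1/(\<gamma> + real i))\<^sup>2) + (1/(\<gamma> + real (Suc n)))\<^sup>2"
    by simp
  show ?case using Suc k s by linarith
qed

lemma R3: fixes y :: real assumes "y \<ge> 1"
  shows "(\<Sum>i=1..n. if y \<le> real i then 1/(real i)\<^sup>2 else 0) \<le> (if y \<le> real n then 2/y - 2/(real n + 1) else 0)"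
proof (induction n)
  case 0 then show ?case using assms by simp
next
  case (Suc n)
  have key: "1/(real n + 1)\<^sup>2 \<le> 2/(real n + 1) - 2/(real n + 2)"
  proof -
    have "1/(real n + 1)\<^sup>2 = 1/((real n+1)*(real n+1))" by (simp add: power2_eq_square)
    also have "\<dots> = 2/(2*((real n+1)*(real n+1)))" by simp
    also have "\<dots> \<le> 2/((real n+1)*(real n+2))"
    proof (rule frac_le)
      have "(real n+1)*(real n+2) \<le> (real n+1)*(2*real n+2)" by (rule mult_left_mono) auto
      then show "(real n+1)*(real n+2) \<le> 2*((real n+1)*(real n+1))" by (simp add: algebra_simps)
    qed auto
    also have "\<dots> = 2/(real n + 1) - 2/(real n + 2)" by (simp add: field_simps)
    finally show ?thesis .
  qed
  have s: "(\<Sum>i=1..Suc n. if y \<le> real i then 1/(real i)\<^sup>2 else 0) = (\<Sum>i=1..n. if y \<le> real i then 1/(real i)\<^sup>2 else 0) + (if y \<le> real (Suc n) then 1/(real (Suc n))\<^sup>2 else 0)"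
    by simp
  have e1: "real (Suc n) = real n + 1" "real (Suc n) + 1 = real n + 2" by simp_all
  show ?case
  proof (cases "y \<le> real n")
    case True
    then have "(\<Sum>i=1..n. if y \<le> real i then 1/(real i)\<^sup>2 else 0) \<le> 2/y - 2/(real n + 1)" using Suc by simp
    moreover have "y \<le> real (Suc n)" using True by simp
    moreover have "(if y \<le> real (Suc n) then 1/(real (Suc n))\<^sup>2 else 0) = 1/(real n + 1)\<^sup>2"
      using True by simp
    moreover have "(if y \<le> real (Suc n) then 2/y - 2/(real (Suc n) + 1) else 0) = 2/y - 2/(real n + 2)"
      using True by simp
    ultimately show ?thesis using s key by linarith
  next
    case False
    then have z: "(\<Sum>i=1..n. if y \<le> real i then 1/(real i)\<^sup>2 else 0) = 0"
      by (intro sum.neutral) auto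
    show ?thesis
    proof (cases "y \<le> real (Suc n)")
      case True
      have "2/(real n + 1) \<le> 2/y" using True assms by (simp add: frac_le)
      moreover have "(if y \<le> real (Suc n) then 1/(real (Suc n))\<^sup>2 else 0) = 1/(real n + 1)\<^sup>2"
        using True by simp
      moreover have "(if y \<le> real (Suc n) then 2/y - 2/(real (Suc n) + 1) else 0) = 2/y - 2/(real n + 2)"
        using True by simp
      ultimately show ?thesis using z key s by linarith
    next
      case False
      then show ?thesis using z s by simp
    qed
  qed
qed

lemma R3': fixes y :: real assumes "y \<ge> 1"
  shows "(\<Sum>i=1..n. if y \<le> real i then 1/(real i)\<^sup>2 else 0) \<le> 2/y"
proof -
  have a: "0 \<le> 2/(real n+1)" by simp
  show ?thesis
  proof (cases "y \<le> real n")
    case True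
    then have "(\<Sum>i=1..n. if y \<le> real i then 1/(real i)\<^sup>2 else 0) \<le> 2/y - 2/(real n + 1)"
      using R3[OF assms, of n] by simp
    then show ?thesis using a by linarith
  next
    case False
    then show ?thesis using R3[OF assms, of n] assms by simp
  qed
qed

lemma R4: fixes y :: real assumes "y \<ge> 0"
  shows "(\<Sum>s=1..n. if real s < y then 1 else 0) \<le> y \<and> (\<Sum>s=1..n. if real s < y then 1 else (0::real)) \<le> real n"
proof (induction n)
  case 0 then show ?case using assms by simp
next
  case (Suc n) then show ?case by auto
qed

lemma R1: fixes x \<gamma> K :: real assumes "\<gamma> > 0" "K \<ge> 1"
  shows "(\<Sum>i=1..n. (1/(\<gamma> + real i))\<^sup>2 * (if \<bar>x\<bar> \<le> max K (real i) then x else 0)\<^sup>2)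
    \<le> K\<^sup>2/\<gamma> + (if \<bar>x\<bar> > K then 2 * \<bar>x\<bar> else 0)"
proof -
  have t: "(1/(\<gamma> + real i))\<^sup>2 * (if \<bar>x\<bar> \<le> max K (real i) then x else 0)\<^sup>2
     \<le> K\<^sup>2 * (1/(\<gamma> + real i))\<^sup>2 + (if K < \<bar>x\<bar> then x\<^sup>2 * (if \<bar>x\<bar> \<le> real i then 1/(real i)\<^sup>2 else 0) else 0)"
    if i: "i \<ge> 1" for i
  proof (cases "\<bar>x\<bar> \<le> K")
    case True
    have "x\<^sup>2 \<le> K\<^sup>2" using True by (metis abs_le_square_iff abs_of_nonneg assms(2) order_trans zero_le_one abs_ge_zero)
    then have "x\<^sup>2 * (1/(\<gamma> + real i))\<^sup>2 \<le> K\<^sup>2 * (1/(\<gamma> + real i))\<^sup>2"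
      by (intro mult_right_mono) auto
    then show ?thesis using True by (auto simp: max_def mult.commute)
  next
    case False
    show ?thesis
    proof (cases "\<bar>x\<bar> \<le> real i")
      case True
      have "(1/(\<gamma> + real i))\<^sup>2 \<le> (1/real i)\<^sup>2"
        using i assms by (intro power_mono) (auto simp: frac_le)
      then have f: "(1/(\<gamma> + real i))\<^sup>2 * x\<^sup>2 \<le> x\<^sup>2 * (1/real i)\<^sup>2"
        by (simp add: mult.commute mult_left_mono)
      have nn: "0 \<le> K\<^sup>2 * (1/(\<gamma> + real i))\<^sup>2" by simp
      have lhs: "(if \<bar>x\<bar> \<le> max K (real i) then x else 0)\<^sup>2 = x\<^sup>2" using True by (simp add: le_max_iff_disj)
      have rhs: "(if K < \<bar>x\<bar> then x\<^sup>2 * (if \<bar>x\<bar> \<le> real i then 1/(real i)\<^sup>2 else 0) else 0) = x\<^sup>2 * (1/real i)\<^sup>2"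
        using True False by (simp add: power_one_over)
      show ?thesis unfolding lhs rhs using f nn by linarith
    next
      case F2: False
      then show ?thesis using False by (auto simp: max_def)
    qed
  qed
  have "(\<Sum>i=1..n. (1/(\<gamma> + real i))\<^sup>2 * (if \<bar>x\<bar> \<le> max K (real i) then x else 0)\<^sup>2)
     \<le> (\<Sum>i=1..n. K\<^sup>2 * (1/(\<gamma> + real i))\<^sup>2 + (if K < \<bar>x\<bar> then x\<^sup>2 * (if \<bar>x\<bar> \<le> real i then 1/(real i)\<^sup>2 else 0) else 0))"
    by (intro sum_mono t) auto
  also have "\<dots> = K\<^sup>2 * (\<Sum>i=1..n. (1/(\<gamma> + real i))\<^sup>2) + (if K < \<bar>x\<bar> then x\<^sup>2 * (\<Sum>i=1..n. if \<bar>x\<bar> \<le> real i then 1/(real i)\<^sup>2 else 0) else 0)"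
    by (simp add: sum.distrib sum_distrib_left)
  also have "\<dots> \<le> K\<^sup>2/\<gamma> + (if \<bar>x\<bar> > K then 2 * \<bar>x\<bar> else 0)"
  proof -
    have "K\<^sup>2 * (\<Sum>i=1..n. (1/(\<gamma> + real i))\<^sup>2) \<le> K\<^sup>2 * (1/\<gamma>)"
    proof (rule mult_left_mono)
      have "0 \<le> 1/(\<gamma> + real n)" using assms(1) by simp
      then show "(\<Sum>i=1..n. (1/(\<gamma> + real i))\<^sup>2) \<le> 1/\<gamma>" using R2[OF assms(1), of n] by linarith
    qed simp
    moreover have "x\<^sup>2 * (\<Sum>i=1..n. if \<bar>x\<bar> \<le> real i then 1/(real i)\<^sup>2 else 0) \<le> 2 * \<bar>x\<bar>" if "K < \<bar>x\<bar>"
    proof -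
      have "x\<^sup>2 * (\<Sum>i=1..n. if \<bar>x\<bar> \<le> real i then 1/(real i)\<^sup>2 else 0) \<le> x\<^sup>2 * (2/\<bar>x\<bar>)"
        using R3'[of "\<bar>x\<bar>" n] that assms by (intro mult_left_mono) auto
      also have "\<dots> = 2 * \<bar>x\<bar>" using that assms by (simp add: power2_eq_square field_simps)
      finally show ?thesis .
    qed
    ultimately show ?thesis by auto
  qed
  finally show ?thesis .
qed




context prob_space begin

lemma indep_orth:
  fixes Y :: "nat \<Rightarrow> 'a \<Rightarrow> real"
  assumes indep: "indep_vars (\<lambda>_. borel) Y {1..}"
    and G: "G \<in> borel_measurable (PiM {1..n} (\<lambda>_. borel))"
    and intG: "integrable M (\<lambda>\<omega>. G (\<lambda>i\<in>{1..n}. Y i \<omega>))"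
    and intY: "integrable M (Y (Suc n))"
    and mean: "expectation (Y (Suc n)) = 0"
  shows "expectation (\<lambda>\<omega>. G (\<lambda>i\<in>{1..n}. Y i \<omega>) * Y (Suc n) \<omega>) = 0"
proof -
  have "indep_var (PiM {1..n} (\<lambda>_. borel)) (\<lambda>\<omega>. \<lambda>i\<in>{1..n}. Y i \<omega>) (PiM {Suc n} (\<lambda>_. borel)) (\<lambda>\<omega>. \<lambda>i\<in>{Suc n}. Y i \<omega>)"
    by (rule indep_var_restrict[OF indep]) auto
  then have "indep_var borel (G \<circ> (\<lambda>\<omega>. \<lambda>i\<in>{1..n}. Y i \<omega>)) borel ((\<lambda>f. f (Suc n)) \<circ> (\<lambda>\<omega>. \<lambda>i\<in>{Suc n}. Y i \<omega>))"
    by (rule indep_var_compose[OF _ G]) measurable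
  then have "indep_var borel (\<lambda>\<omega>. G (\<lambda>i\<in>{1..n}. Y i \<omega>)) borel (Y (Suc n))"
    by (simp add: comp_def)
  from indep_var_lebesgue_integral[OF this intG intY] mean show ?thesis by simp
qed

lemma integrable_bdd:
  fixes f :: "'a \<Rightarrow> real"
  assumes "f \<in> borel_measurable M" "\<And>\<omega>. \<omega> \<in> space M \<Longrightarrow> \<bar>f \<omega>\<bar> \<le> C"
  shows "integrable M f"
  by (rule integrable_const_bound[where B=C]) (auto intro!: AE_I2 assms)

lemma HR:
  fixes Y :: "nat \<Rightarrow> 'a \<Rightarrow> real" and c Bd :: "nat \<Rightarrow> real" and \<epsilon> :: real
  assumes indep: "indep_vars (\<lambda>_. borel) Y {1..}"
    and meas[measurable]: "\<And>i. Y i \<in> borel_measurable M"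
    and bnd: "\<And>i \<omega>. \<omega> \<in> space M \<Longrightarrow> \<bar>Y i \<omega>\<bar> \<le> Bd i"
    and mean: "\<And>i. i \<ge> 1 \<Longrightarrow> expectation (Y i) = 0"
    and cpos: "\<And>i. 0 \<le> c (Suc i)" and cdec: "\<And>i. c (Suc i) \<le> c i"
    and eps: "\<epsilon> > 0"
  shows "\<epsilon>\<^sup>2 * prob {\<omega>\<in>space M. \<exists>k\<in>{1..n}. \<epsilon> \<le> c k * \<bar>\<Sum>s=1..k. Y s \<omega>\<bar>}
     + expectation (\<lambda>\<omega>. (c n)\<^sup>2 * (\<Sum>s=1..n. Y s \<omega>)\<^sup>2 *
          indicator {\<omega>\<in>space M. \<forall>k\<in>{1..n}. c k * \<bar>\<Sum>s=1..k. Y s \<omega>\<bar> < \<epsilon>} \<omega>)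
     \<le> (\<Sum>i=1..n. (c i)\<^sup>2 * expectation (\<lambda>\<omega>. (Y i \<omega>)\<^sup>2))"
proof (induction n)
  case 0
  then show ?case by simp
next
  case (Suc n)
  define S where "S k \<omega> = (\<Sum>s=1..k. Y s \<omega>)" for k \<omega>
  define B where "B k = {\<omega>\<in>space M. \<exists>j\<in>{1..k}. \<epsilon> \<le> c j * \<bar>S j \<omega>\<bar>}" for k
  define C where "C k = {\<omega>\<in>space M. \<forall>j\<in>{1..k}. c j * \<bar>S j \<omega>\<bar> < \<epsilon>}" for k
  define A where "A = {\<omega>\<in>space M. (\<forall>j\<in>{1..n}. c j * \<bar>S j \<omega>\<bar> < \<epsilon>) \<and> \<epsilon> \<le> c (Suc n) * \<bar>S (Suc n) \<omega>\<bar>}"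
  have Smeas[measurable]: "S k \<in> borel_measurable M" for k unfolding S_def by measurable
  have Bm[measurable]: "B k \<in> sets M" for k unfolding B_def by measurable
  have Cm[measurable]: "C k \<in> sets M" for k unfolding C_def by measurable
  have Am[measurable]: "A \<in> sets M" unfolding A_def by measurable
  have Sb: "\<bar>S k \<omega>\<bar> \<le> (\<Sum>s=1..k. Bd s)" if "\<omega> \<in> space M" for k \<omega>
    unfolding S_def using bnd[OF that] by (intro order_trans[OF sum_abs] sum_mono) auto
  have S2b: "(S k \<omega>)\<^sup>2 \<le> (\<Sum>s=1..k. Bd s)\<^sup>2" if "\<omega> \<in> space M" for k \<omega>
  proof -
    have "\<bar>S k \<omega>\<bar>\<^sup>2 \<le> (\<Sum>s=1..k. Bd s)\<^sup>2" by (rule power_mono[OF Sb[OF that]]) simp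
    then show ?thesis by simp
  qed
  have Yb2: "(Y k \<omega>)\<^sup>2 \<le> (Bd k)\<^sup>2" if "\<omega> \<in> space M" for k \<omega>
  proof -
    have "\<bar>Y k \<omega>\<bar>\<^sup>2 \<le> (Bd k)\<^sup>2" by (rule power_mono[OF bnd[OF that]]) simp
    then show ?thesis by simp
  qed
  have IH: "\<epsilon>\<^sup>2 * prob (B n) + expectation (\<lambda>\<omega>. (c n)\<^sup>2 * (S n \<omega>)\<^sup>2 * indicator (C n) \<omega>)
     \<le> (\<Sum>i=1..n. (c i)\<^sup>2 * expectation (\<lambda>\<omega>. (Y i \<omega>)\<^sup>2))"
    using Suc.IH unfolding S_def B_def C_def .
  have e: "{1..Suc n} = insert (Suc n) {1..n}" by auto
  have BU: "B (Suc n) = B n \<union> A" unfolding A_def B_def C_def e by (auto simp: not_le[symmetric])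
  have disj: "B n \<inter> A = {}" unfolding A_def B_def C_def by (auto simp: not_le[symmetric])
  have PB: "prob (B (Suc n)) = prob (B n) + prob A"
    unfolding BU by (rule finite_measure_Union) (use disj in auto)
  define c' where "c' = c (Suc n)"
  define g1 where "g1 \<omega> = (S n \<omega>)\<^sup>2 * indicator (C n) \<omega>" for \<omega>
  define g2 where "g2 \<omega> = (S n \<omega> * indicator (C n) \<omega>) * Y (Suc n) \<omega>" for \<omega>
  define g3 where "g3 \<omega> = (Y (Suc n) \<omega>)\<^sup>2 * indicator (C n) \<omega>" for \<omega>
  define f' where "f' \<omega> = c'\<^sup>2 * (S (Suc n) \<omega>)\<^sup>2 * indicator (C (Suc n)) \<omega>" for \<omega>
  have SS: "S (Suc n) \<omega> = S n \<omega> + Y (Suc n) \<omega>" for \<omega> unfolding S_def by simp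
  have int1: "integrable M g1" unfolding g1_def
  proof (rule integrable_bdd[where C="(\<Sum>s=1..n. Bd s)\<^sup>2"])
    fix \<omega> assume w: "\<omega> \<in> space M"
    show "\<bar>(S n \<omega>)\<^sup>2 * indicator (C n) \<omega>\<bar> \<le> (\<Sum>s=1..n. Bd s)\<^sup>2"
      using S2b[OF w, of n] by (auto simp: indicator_def)
  qed measurable
  have int3: "integrable M g3" unfolding g3_def
  proof (rule integrable_bdd[where C="(Bd (Suc n))\<^sup>2"])
    fix \<omega> assume w: "\<omega> \<in> space M"
    show "\<bar>(Y (Suc n) \<omega>)\<^sup>2 * indicator (C n) \<omega>\<bar> \<le> (Bd (Suc n))\<^sup>2"
      using Yb2[OF w, of "Suc n"] by (auto simp: indicator_def)
  qed measurable
  have int2: "integrable M g2" unfolding g2_def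
  proof (rule integrable_bdd[where C="(\<Sum>s=1..n. Bd s) * Bd (Suc n)"])
    fix \<omega> assume w: "\<omega> \<in> space M"
    have "\<bar>S n \<omega> * indicator (C n) \<omega> * Y (Suc n) \<omega>\<bar> \<le> \<bar>S n \<omega>\<bar> * \<bar>Y (Suc n) \<omega>\<bar>"
      by (auto simp: indicator_def abs_mult)
    also have "\<dots> \<le> (\<Sum>s=1..n. Bd s) * Bd (Suc n)"
      using Sb[OF w, of n] bnd[OF w, of "Suc n"] abs_ge_zero[of "S n \<omega>"] abs_ge_zero[of "Y (Suc n) \<omega>"]
      by (intro mult_mono) linarith+
    finally show "\<bar>S n \<omega> * indicator (C n) \<omega> * Y (Suc n) \<omega>\<bar> \<le> (\<Sum>s=1..n. Bd s) * Bd (Suc n)" .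
  qed measurable
  have intY2: "integrable M (\<lambda>\<omega>. (Y (Suc n) \<omega>)\<^sup>2)"
  proof (rule integrable_bdd[where C="(Bd (Suc n))\<^sup>2"])
    fix \<omega> assume w: "\<omega> \<in> space M"
    show "\<bar>(Y (Suc n) \<omega>)\<^sup>2\<bar> \<le> (Bd (Suc n))\<^sup>2" using Yb2[OF w, of "Suc n"] by simp
  qed measurable
  have intf': "integrable M f'" unfolding f'_def
  proof (rule integrable_bdd[where C="c'\<^sup>2 * (\<Sum>s=1..Suc n. Bd s)\<^sup>2"])
    fix \<omega> assume w: "\<omega> \<in> space M"
    have "\<bar>c'\<^sup>2 * (S (Suc n) \<omega>)\<^sup>2 * indicator (C (Suc n)) \<omega>\<bar> \<le> c'\<^sup>2 * (S (Suc n) \<omega>)\<^sup>2"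
      by (auto simp: indicator_def)
    also have "\<dots> \<le> c'\<^sup>2 * (\<Sum>s=1..Suc n. Bd s)\<^sup>2"
      by (rule mult_left_mono[OF S2b[OF w]]) simp
    finally show "\<bar>c'\<^sup>2 * (S (Suc n) \<omega>)\<^sup>2 * indicator (C (Suc n)) \<omega>\<bar> \<le> c'\<^sup>2 * (\<Sum>s=1..Suc n. Bd s)\<^sup>2" .
  qed measurable
  have E2: "expectation g2 = 0"
  proof -
    define G where "G f = (\<Sum>s=1..n. f s) * (if \<forall>j\<in>{1..n}. c j * \<bar>\<Sum>s=1..j. f s\<bar> < \<epsilon> then 1 else 0)"
      for f :: "nat \<Rightarrow> real"
    have Gm: "G \<in> borel_measurable (PiM {1..n} (\<lambda>_. borel))" unfolding G_def by measurable
    have GS: "G (\<lambda>i\<in>{1..n}. Y i \<omega>) = S n \<omega> * indicator (C n) \<omega>" if "\<omega> \<in> space M" for \<omega>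
    proof -
      have "(\<Sum>s=1..j. (\<lambda>i\<in>{1..n}. Y i \<omega>) s) = S j \<omega>" if "j \<le> n" for j
        unfolding S_def using that by (intro sum.cong) auto
      then show ?thesis using \<open>\<omega> \<in> space M\<close> unfolding G_def C_def by (auto simp: indicator_def)
    qed
    have intG: "integrable M (\<lambda>\<omega>. G (\<lambda>i\<in>{1..n}. Y i \<omega>))"
    proof (rule integrable_bdd[where C="\<Sum>s=1..n. Bd s"])
      show "(\<lambda>\<omega>. G (\<lambda>i\<in>{1..n}. Y i \<omega>)) \<in> borel_measurable M"
        by (rule measurable_compose[OF _ Gm]) measurable
      fix \<omega> assume w: "\<omega> \<in> space M"
      show "\<bar>G (\<lambda>i\<in>{1..n}. Y i \<omega>)\<bar> \<le> (\<Sum>s=1..n. Bd s)"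
        unfolding GS[OF w] using Sb[OF w, of n] by (auto simp: indicator_def)
    qed
    have "expectation g2 = expectation (\<lambda>\<omega>. G (\<lambda>i\<in>{1..n}. Y i \<omega>) * Y (Suc n) \<omega>)"
      by (rule Bochner_Integration.integral_cong) (simp_all only: g2_def GS)
    also have "\<dots> = 0"
      by (rule indep_orth[OF indep Gm intG integrable_bdd[OF meas bnd] mean]) auto
    finally show ?thesis .
  qed
  have pw: "\<epsilon>\<^sup>2 * indicator A \<omega> + f' \<omega> \<le> c'\<^sup>2 * (S (Suc n) \<omega>)\<^sup>2 * indicator (C n) \<omega>"
    if w: "\<omega> \<in> space M" for \<omega>
  proof (cases "\<omega> \<in> A")
    case True
    then have hit: "\<epsilon> \<le> c' * \<bar>S (Suc n) \<omega>\<bar>" and inC: "\<omega> \<in> C n"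
      unfolding A_def C_def c'_def by auto
    have nC: "\<omega> \<notin> C (Suc n)"
    proof
      assume "\<omega> \<in> C (Suc n)"
      then have "c (Suc n) * \<bar>S (Suc n) \<omega>\<bar> < \<epsilon>" unfolding C_def by auto
      with hit show False by (simp add: c'_def)
    qed
    have "\<epsilon>\<^sup>2 \<le> (c' * \<bar>S (Suc n) \<omega>\<bar>)\<^sup>2" by (rule power_mono[OF hit]) (use eps in simp)
    then show ?thesis using True inC nC by (simp add: f'_def power_mult_distrib)
  next
    case False
    show ?thesis
    proof (cases "\<omega> \<in> C (Suc n)")
      case True
      then have "\<omega> \<in> C n" unfolding C_def by auto
      then show ?thesis using True False by (simp add: f'_def)
    next
      case F2: False
      then show ?thesis using False by (simp add: f'_def)
    qed
  qed
  have intA: "integrable M (\<lambda>\<omega>. \<epsilon>\<^sup>2 * indicator A \<omega>)" 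
    apply (rule integrable_bdd[where C="\<epsilon>\<^sup>2"])
     apply measurable
    apply (auto simp: indicator_def)
    done
  have intR: "integrable M (\<lambda>\<omega>. c'\<^sup>2 * (S (Suc n) \<omega>)\<^sup>2 * indicator (C n) \<omega>)"
  proof (rule integrable_bdd[where C="c'\<^sup>2 * (\<Sum>s=1..Suc n. Bd s)\<^sup>2"])
    fix \<omega> assume w: "\<omega> \<in> space M"
    have "\<bar>c'\<^sup>2 * (S (Suc n) \<omega>)\<^sup>2 * indicator (C n) \<omega>\<bar> \<le> c'\<^sup>2 * (S (Suc n) \<omega>)\<^sup>2"
      by (auto simp: indicator_def)
    also have "\<dots> \<le> c'\<^sup>2 * (\<Sum>s=1..Suc n. Bd s)\<^sup>2"
      by (rule mult_left_mono[OF S2b[OF w]]) simp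
    finally show "\<bar>c'\<^sup>2 * (S (Suc n) \<omega>)\<^sup>2 * indicator (C n) \<omega>\<bar> \<le> c'\<^sup>2 * (\<Sum>s=1..Suc n. Bd s)\<^sup>2" .
  qed measurable
  have step1: "\<epsilon>\<^sup>2 * prob A + expectation f' \<le> expectation (\<lambda>\<omega>. c'\<^sup>2 * (S (Suc n) \<omega>)\<^sup>2 * indicator (C n) \<omega>)"
  proof -
    have "\<epsilon>\<^sup>2 * prob A + expectation f' = expectation (\<lambda>\<omega>. \<epsilon>\<^sup>2 * indicator A \<omega> + f' \<omega>)"
      using intf' Am by (simp add: emeasure_eq_measure)
    also have "\<dots> \<le> expectation (\<lambda>\<omega>. c'\<^sup>2 * (S (Suc n) \<omega>)\<^sup>2 * indicator (C n) \<omega>)"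
      by (rule integral_mono[OF Bochner_Integration.integrable_add[OF intA intf'] intR pw])
    finally show ?thesis .
  qed
  have dec: "expectation (\<lambda>\<omega>. c'\<^sup>2 * (S (Suc n) \<omega>)\<^sup>2 * indicator (C n) \<omega>)
     = c'\<^sup>2 * expectation g1 + 2 * c'\<^sup>2 * expectation g2 + c'\<^sup>2 * expectation g3"
  proof -
    have "expectation (\<lambda>\<omega>. c'\<^sup>2 * (S (Suc n) \<omega>)\<^sup>2 * indicator (C n) \<omega>)
       = expectation (\<lambda>\<omega>. c'\<^sup>2 * g1 \<omega> + 2 * c'\<^sup>2 * g2 \<omega> + c'\<^sup>2 * g3 \<omega>)"
      by (rule Bochner_Integration.integral_cong)
         (auto simp: g1_def g2_def g3_def SS power2_eq_square algebra_simps indicator_def)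
    also have "\<dots> = c'\<^sup>2 * expectation g1 + 2 * c'\<^sup>2 * expectation g2 + c'\<^sup>2 * expectation g3"
      using int1 int2 int3 by simp
    finally show ?thesis .
  qed
  have g3le: "expectation g3 \<le> expectation (\<lambda>\<omega>. (Y (Suc n) \<omega>)\<^sup>2)"
    by (rule integral_mono[OF int3 intY2]) (auto simp: g3_def indicator_def)
  have g1nn: "0 \<le> expectation g1" by (rule integral_nonneg_AE) (auto simp: g1_def)
  have cc: "c'\<^sup>2 \<le> (c n)\<^sup>2" unfolding c'_def by (rule power_mono[OF cdec cpos])
  have IH': "expectation (\<lambda>\<omega>. (c n)\<^sup>2 * (S n \<omega>)\<^sup>2 * indicator (C n) \<omega>) = (c n)\<^sup>2 * expectation g1"
    unfolding g1_def by (simp add: mult.assoc)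
  have "\<epsilon>\<^sup>2 * prob (B (Suc n)) + expectation f' = \<epsilon>\<^sup>2 * prob (B n) + (\<epsilon>\<^sup>2 * prob A + expectation f')"
    unfolding PB by (simp add: algebra_simps)
  also have "\<dots> \<le> \<epsilon>\<^sup>2 * prob (B n) + (c'\<^sup>2 * expectation g1 + c'\<^sup>2 * expectation g3)"
    using step1 dec E2 by simp
  also have "\<dots> \<le> \<epsilon>\<^sup>2 * prob (B n) + ((c n)\<^sup>2 * expectation g1 + c'\<^sup>2 * expectation (\<lambda>\<omega>. (Y (Suc n) \<omega>)\<^sup>2))"
    using mult_right_mono[OF cc g1nn] mult_left_mono[OF g3le, of "c'\<^sup>2"] by simp
  also have "\<dots> \<le> (\<Sum>i=1..Suc n. (c i)\<^sup>2 * expectation (\<lambda>\<omega>. (Y i \<omega>)\<^sup>2))"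
    using IH IH' by (simp add: c'_def)
  finally show ?case unfolding f'_def c'_def S_def B_def C_def .
qed

end


theorem mainTheorem6:
  fixes M :: "'a measure" and X :: "nat \<Rightarrow> 'a \<Rightarrow> real"
    and \<epsilon> \<gamma> K :: real
  assumes "prob_space M"
    and rv: "\<And>t. t \<ge> 1 \<Longrightarrow> X t \<in> borel_measurable M"
    and indep: "prob_space.indep_vars M (\<lambda>_. borel) X {1..}"
    and ident: "\<And>t. t \<ge> 1 \<Longrightarrow> distr M borel (X t) = distr M borel (X 1)"
    and integ: "integrable M (X 1)"
    and mean0: "(\<integral>\<omega>. X 1 \<omega> \<partial>M) = 0"
    and eps: "\<epsilon> > 0" and gam: "\<gamma> > 0" and K: "K \<ge> 1"
  shows "measure M {\<omega> \<in> space M.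
            (SUP t::nat. ereal (\<bar>\<Sum>s=1..t. X s \<omega>\<bar> / (\<gamma> + real t)))
              > ereal (\<epsilon> + tail_mass M (X 1) K)}
         \<le> 8 * K\<^sup>2 / (\<gamma> * \<epsilon>\<^sup>2) + (16 / \<epsilon>\<^sup>2 + 2) * tail_mass M (X 1) K"
proof -
  interpret prob_space M by fact
  define r where "r = tail_mass M (X 1) K"
  define X' where "X' s = (if 1 \<le> s then X s else (\<lambda>_. 0))" for s
  have X'm[measurable]: "X' s \<in> borel_measurable M" for s unfolding X'_def using rv by auto
  have X'eq: "X' s = X s" if "1 \<le> s" for s using that by (simp add: X'_def)
  have X1m[measurable]: "X 1 \<in> borel_measurable M" using rv by simp
  define L where "L s = max K (real s)" for s :: nat
  define h where "h s x = (if \<bar>x\<bar> \<le> L s then x else 0)" for s :: nat and x :: real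
  define m where "m s = expectation (\<lambda>\<omega>. h s (X 1 \<omega>))" for s
  define Y where "Y s \<omega> = (if 1 \<le> s then h s (X' s \<omega>) - m s else 0)" for s \<omega>
  define c where "c t = 1/(\<gamma> + real t)" for t :: nat
  have hm[measurable]: "h s \<in> borel_measurable borel" for s unfolding h_def by measurable
  have Ym[measurable]: "Y s \<in> borel_measurable M" for s unfolding Y_def by measurable
  have ID: "expectation (\<lambda>\<omega>. f (X i \<omega>)) = expectation (\<lambda>\<omega>. f (X 1 \<omega>))"
    if i: "1 \<le> i" and f[measurable]: "f \<in> borel_measurable borel" for i and f :: "real \<Rightarrow> real"
  proof -
    have Xi[measurable]: "X i \<in> borel_measurable M" using rv i by simp
    have "expectation (\<lambda>\<omega>. f (X i \<omega>)) = integral\<^sup>L (distr M borel (X i)) f"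
      by (rule integral_distr[symmetric]) measurable
    also have "\<dots> = integral\<^sup>L (distr M borel (X 1)) f" using ident[OF i] by simp
    also have "\<dots> = expectation (\<lambda>\<omega>. f (X 1 \<omega>))"
      by (rule integral_distr) measurable
    finally show ?thesis .
  qed
  define W where "W \<omega> = (if K < \<bar>X 1 \<omega>\<bar> then \<bar>X 1 \<omega>\<bar> else 0)" for \<omega>
  have Wm[measurable]: "W \<in> borel_measurable M" unfolding W_def by measurable
  have intW: "integrable M W"
    by (rule Bochner_Integration.integrable_bound[OF integ Wm]) (auto simp: W_def)
  have r_alt: "r = expectation W"
    unfolding r_def tail_mass_def W_def by (rule Bochner_Integration.integral_cong) (auto simp: indicator_def)
  have r0: "0 \<le> r" unfolding r_alt by (rule integral_nonneg_AE) (auto simp: W_def)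
  have hb: "\<bar>h s x\<bar> \<le> L s" for s x by (auto simp: h_def L_def)
  have L0: "0 \<le> L s" for s using K by (auto simp: L_def)
  have inth: "integrable M (\<lambda>\<omega>. h s (Z \<omega>))" if [measurable]: "Z \<in> borel_measurable M" for s Z
    by (rule integrable_bdd[where C="L s"]) (auto intro: hb)
  have mb: "\<bar>m s\<bar> \<le> r" for s
  proof -
    define q where "q \<omega> = X 1 \<omega> - h s (X 1 \<omega>)" for \<omega>
    have qm[measurable]: "q \<in> borel_measurable M" unfolding q_def by measurable
    have qb: "\<bar>q \<omega>\<bar> \<le> W \<omega>" for \<omega> using L_def by (auto simp: q_def h_def W_def)
    have intq: "integrable M q" unfolding q_def using integ inth[OF X1m] by simp
    have "expectation q = 0 - m s" unfolding q_def m_def using integ inth[OF X1m] mean0 by simp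
    then have "\<bar>m s\<bar> = \<bar>expectation q\<bar>" by simp
    also have "\<dots> \<le> expectation (\<lambda>\<omega>. \<bar>q \<omega>\<bar>)" by (rule integral_abs_bound)
    also have "\<dots> \<le> expectation W" by (rule integral_mono[OF _ intW]) (use intq qb in auto)
    finally show ?thesis unfolding r_alt .
  qed
  have Yindep: "indep_vars (\<lambda>_. borel) Y {1..}"
  proof -
    have "indep_vars (\<lambda>_. borel) (\<lambda>i \<omega>. (\<lambda>x. h i x - m i) (X i \<omega>)) {1..}"
      by (rule indep_vars_compose2[OF indep]) measurable
    then show ?thesis
      by (rule indep_vars_cong[THEN iffD1, rotated 3]) (auto simp: Y_def X'_def)
  qed
  have Ybnd: "\<bar>Y i \<omega>\<bar> \<le> L i + r" for i \<omega>
  proof -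
    have "\<bar>h i (X' i \<omega>) - m i\<bar> \<le> L i + r" using hb[of i "X' i \<omega>"] mb[of i] by linarith
    then show ?thesis using L0[of i] r0 by (auto simp: Y_def)
  qed
  have Ybnd': "\<And>i \<omega>. \<omega> \<in> space M \<Longrightarrow> \<bar>Y i \<omega>\<bar> \<le> (\<lambda>i. L i + r) i" using Ybnd by simp
  have Ymean: "expectation (Y i) = 0" if i: "1 \<le> i" for i
  proof -
    have "expectation (Y i) = expectation (\<lambda>\<omega>. h i (X i \<omega>) - m i)"
      using i by (intro Bochner_Integration.integral_cong) (auto simp: Y_def X'_def)
    also have "\<dots> = expectation (\<lambda>\<omega>. h i (X i \<omega>)) - m i"
      using inth[of "X i"] rv[OF i] by (simp add: prob_space)
    also have "\<dots> = 0" using ID[OF i hm] by (simp add: m_def)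
    finally show ?thesis .
  qed
  have cpos: "0 \<le> c (Suc i)" for i using gam by (simp add: c_def)
  have cdec: "c (Suc i) \<le> c i" for i using gam by (simp add: c_def frac_le)
  define H where "H n = {\<omega>\<in>space M. \<exists>k\<in>{1..n}. \<epsilon> \<le> c k * \<bar>\<Sum>s=1..k. Y s \<omega>\<bar>}" for n
  have Hb: "\<epsilon>\<^sup>2 * prob (H n) \<le> (\<Sum>i=1..n. (c i)\<^sup>2 * expectation (\<lambda>\<omega>. (Y i \<omega>)\<^sup>2))" for n
  proof -
    have "0 \<le> expectation (\<lambda>\<omega>. (c n)\<^sup>2 * (\<Sum>s=1..n. Y s \<omega>)\<^sup>2 *
          indicator {\<omega>\<in>space M. \<forall>k\<in>{1..n}. c k * \<bar>\<Sum>s=1..k. Y s \<omega>\<bar> < \<epsilon>} \<omega>)"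
      by (rule integral_nonneg_AE) (auto simp: indicator_def)
    then show ?thesis
      using HR[where Bd="\<lambda>i. L i + r" and n=n and c=c and Y=Y and \<epsilon>=\<epsilon>, OF Yindep Ym Ybnd' Ymean cpos cdec eps] unfolding H_def by linarith
  qed
  have inth2: "integrable M (\<lambda>\<omega>. (h s (Z \<omega>))\<^sup>2)" if [measurable]: "Z \<in> borel_measurable M" for s Z
  proof (rule integrable_bdd[where C="(L s)\<^sup>2"])
    fix \<omega> show "\<bar>(h s (Z \<omega>))\<^sup>2\<bar> \<le> (L s)\<^sup>2"
      using power_mono[OF hb[of s "Z \<omega>"], of 2] by simp
  qed measurable
  have VarB: "expectation (\<lambda>\<omega>. (Y i \<omega>)\<^sup>2) \<le> expectation (\<lambda>\<omega>. (h i (X 1 \<omega>))\<^sup>2)" if i: "1 \<le> i" for i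
  proof -
    have Xi[measurable]: "X i \<in> borel_measurable M" using rv i by simp
    have "expectation (\<lambda>\<omega>. (Y i \<omega>)\<^sup>2)
       = expectation (\<lambda>\<omega>. (h i (X i \<omega>))\<^sup>2 - 2 * m i * h i (X i \<omega>) + (m i)\<^sup>2)"
      using i by (intro Bochner_Integration.integral_cong) (auto simp: Y_def X'_def power2_diff)
    also have "\<dots> = expectation (\<lambda>\<omega>. (h i (X i \<omega>))\<^sup>2) - 2 * m i * expectation (\<lambda>\<omega>. h i (X i \<omega>)) + (m i)\<^sup>2"
      using inth[OF Xi, of i] inth2[OF Xi, of i] by (simp add: prob_space)
    also have "\<dots> = expectation (\<lambda>\<omega>. (h i (X i \<omega>))\<^sup>2) - (m i)\<^sup>2"
      using ID[OF i hm] by (simp add: m_def power2_eq_square)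
    also have "\<dots> \<le> expectation (\<lambda>\<omega>. (h i (X i \<omega>))\<^sup>2)" by simp
    also have "\<dots> = expectation (\<lambda>\<omega>. (h i (X 1 \<omega>))\<^sup>2)"
      by (rule ID[OF i, of "\<lambda>x. (h i x)\<^sup>2"]) measurable
    finally show ?thesis .
  qed
  have SumB: "(\<Sum>i=1..n. (c i)\<^sup>2 * expectation (\<lambda>\<omega>. (Y i \<omega>)\<^sup>2)) \<le> K\<^sup>2/\<gamma> + 2 * r" for n
  proof -
    have "(\<Sum>i=1..n. (c i)\<^sup>2 * expectation (\<lambda>\<omega>. (Y i \<omega>)\<^sup>2))
       \<le> (\<Sum>i=1..n. (c i)\<^sup>2 * expectation (\<lambda>\<omega>. (h i (X 1 \<omega>))\<^sup>2))"
      by (intro sum_mono mult_left_mono VarB) auto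
    also have "\<dots> = expectation (\<lambda>\<omega>. \<Sum>i=1..n. (c i)\<^sup>2 * (h i (X 1 \<omega>))\<^sup>2)"
      using inth2[OF X1m] by (simp add: Bochner_Integration.integral_sum)
    also have "\<dots> \<le> expectation (\<lambda>\<omega>. K\<^sup>2/\<gamma> + 2 * W \<omega>)"
    proof (rule integral_mono)
      show "integrable M (\<lambda>\<omega>. \<Sum>i=1..n. (c i)\<^sup>2 * (h i (X 1 \<omega>))\<^sup>2)"
        using inth2[OF X1m] by auto
      show "integrable M (\<lambda>\<omega>. K\<^sup>2/\<gamma> + 2 * W \<omega>)" using intW by auto
      fix \<omega>
      show "(\<Sum>i=1..n. (c i)\<^sup>2 * (h i (X 1 \<omega>))\<^sup>2) \<le> K\<^sup>2/\<gamma> + 2 * W \<omega>"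
        unfolding c_def h_def L_def by (subst mult_2[where z="W \<omega>"], unfold W_def, rule order_trans[OF R1[OF gam K, where n=n and x="X 1 \<omega>"]]) simp
    qed
    also have "\<dots> = K\<^sup>2/\<gamma> + 2 * r" using intW by (simp add: r_alt prob_space)
    finally show ?thesis .
  qed
  have PH: "prob (H n) \<le> (K\<^sup>2/\<gamma> + 2 * r) / \<epsilon>\<^sup>2" for n
    using Hb[of n] SumB[of n] eps by (simp add: field_simps)
  define Aev where "Aev n = {\<omega>\<in>space M. \<exists>s\<in>{1..n}. L s < \<bar>X' s \<omega>\<bar>}" for n
  define E where "E n = {\<omega>\<in>space M. \<exists>t\<in>{1..n}. \<epsilon> + r < \<bar>\<Sum>s=1..t. X' s \<omega>\<bar> / (\<gamma> + real t)}" for n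
  have Aevm[measurable]: "Aev n \<in> sets M" for n unfolding Aev_def by measurable
  have Em[measurable]: "E n \<in> sets M" for n unfolding E_def by measurable
  have Hm[measurable]: "H n \<in> sets M" for n unfolding H_def by measurable
  have PA: "prob (Aev n) \<le> r" for n
  proof -
    define f where "f s x = (if L s < \<bar>x\<bar> then 1 else (0::real))" for s x
    have fm[measurable]: "f s \<in> borel_measurable borel" for s unfolding f_def by measurable
    have intf: "integrable M (\<lambda>\<omega>. f s (Z \<omega>))" if [measurable]: "Z \<in> borel_measurable M" for s Z
      by (rule integrable_bdd[where C=1]) (auto simp: f_def)
    have "Aev n = (\<Union>s\<in>{1..n}. {\<omega>\<in>space M. L s < \<bar>X' s \<omega>\<bar>})" unfolding Aev_def by auto
    then have "prob (Aev n) \<le> (\<Sum>s\<in>{1..n}. prob {\<omega>\<in>space M. L s < \<bar>X' s \<omega>\<bar>})"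
      by (simp only:) (rule finite_measure_subadditive_finite, auto)
    also have "\<dots> = (\<Sum>s\<in>{1..n}. expectation (\<lambda>\<omega>. f s (X 1 \<omega>)))"
    proof (rule sum.cong[OF refl])
      fix s assume s: "s \<in> {1..n}"
      then have s1: "1 \<le> s" by simp
      have "prob {\<omega>\<in>space M. L s < \<bar>X' s \<omega>\<bar>} = expectation (indicator {\<omega>\<in>space M. L s < \<bar>X' s \<omega>\<bar>})"
        by (simp add: emeasure_eq_measure)
      also have "\<dots> = expectation (\<lambda>\<omega>. f s (X s \<omega>))"
        using s1 by (intro Bochner_Integration.integral_cong) (auto simp: f_def indicator_def X'_def)
      also have "\<dots> = expectation (\<lambda>\<omega>. f s (X 1 \<omega>))" by (rule ID[OF s1 fm])
      finally show "prob {\<omega>\<in>space M. L s < \<bar>X' s \<omega>\<bar>} = expectation (\<lambda>\<omega>. f s (X 1 \<omega>))" .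
    qed
    also have "\<dots> = expectation (\<lambda>\<omega>. \<Sum>s\<in>{1..n}. f s (X 1 \<omega>))"
      using intf[OF X1m] by (simp add: Bochner_Integration.integral_sum)
    also have "\<dots> \<le> expectation W"
    proof (rule integral_mono)
      show "integrable M (\<lambda>\<omega>. \<Sum>s\<in>{1..n}. f s (X 1 \<omega>))" using intf[OF X1m] by auto
      show "integrable M W" by (rule intW)
      fix \<omega>
      show "(\<Sum>s\<in>{1..n}. f s (X 1 \<omega>)) \<le> W \<omega>"
      proof (cases "K < \<bar>X 1 \<omega>\<bar>")
        case True
        have "(\<Sum>s\<in>{1..n}. f s (X 1 \<omega>)) \<le> (\<Sum>s=1..n. if real s < \<bar>X 1 \<omega>\<bar> then 1 else 0)"
          by (intro sum_mono) (auto simp: f_def L_def)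
        also have "\<dots> \<le> \<bar>X 1 \<omega>\<bar>" using R4[of "\<bar>X 1 \<omega>\<bar>" n] by simp
        finally show ?thesis using True by (simp add: W_def)
      next
        case False
        then have "(\<Sum>s\<in>{1..n}. f s (X 1 \<omega>)) = 0" by (intro sum.neutral) (auto simp: f_def L_def)
        then show ?thesis using False by (simp add: W_def)
      qed
    qed
    finally show ?thesis unfolding r_alt .
  qed
  have sub: "E n \<subseteq> Aev n \<union> H n" for n
  proof
    fix \<omega> assume w: "\<omega> \<in> E n"
    show "\<omega> \<in> Aev n \<union> H n"
    proof (cases "\<omega> \<in> Aev n")
      case True then show ?thesis by simp
    next
      case False
      from w obtain t where t: "t \<in> {1..n}" and ws: "\<omega> \<in> space M"
        and big: "\<epsilon> + r < \<bar>\<Sum>s=1..t. X' s \<omega>\<bar> / (\<gamma> + real t)" unfolding E_def by auto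
      have sm: "X' s \<omega> = Y s \<omega> + m s" if "s \<in> {1..t}" for s
      proof -
        have "s \<in> {1..n}" using that t by auto
        then have "\<not> L s < \<bar>X' s \<omega>\<bar>" using False ws unfolding Aev_def by blast
        then have "\<bar>X' s \<omega>\<bar> \<le> L s" by simp
        then show ?thesis using that by (simp add: Y_def h_def)
      qed
      have "(\<Sum>s=1..t. X' s \<omega>) = (\<Sum>s=1..t. Y s \<omega>) + (\<Sum>s=1..t. m s)"
        using sm by (simp add: sum.distrib)
      moreover have "\<bar>\<Sum>s=1..t. m s\<bar> \<le> real t * r"
      proof -
        have "\<bar>\<Sum>s=1..t. m s\<bar> \<le> (\<Sum>s=1..t. r)" using mb by (intro order_trans[OF sum_abs] sum_mono) auto
        then show ?thesis by simp
      qed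
      ultimately have tri: "\<bar>\<Sum>s=1..t. X' s \<omega>\<bar> \<le> \<bar>\<Sum>s=1..t. Y s \<omega>\<bar> + real t * r" by linarith
      have gt: "\<gamma> + real t > 0" using gam by simp
      from big gt have "(\<epsilon> + r) * (\<gamma> + real t) < \<bar>\<Sum>s=1..t. X' s \<omega>\<bar>" by (simp add: field_simps)
      with tri have "(\<epsilon> + r) * (\<gamma> + real t) < \<bar>\<Sum>s=1..t. Y s \<omega>\<bar> + real t * r" by linarith
      moreover have "0 \<le> r * \<gamma>" using r0 gam by simp
      ultimately have "\<epsilon> * (\<gamma> + real t) \<le> \<bar>\<Sum>s=1..t. Y s \<omega>\<bar>" by (simp add: algebra_simps)
      then have "\<epsilon> \<le> c t * \<bar>\<Sum>s=1..t. Y s \<omega>\<bar>" using gt by (simp add: c_def field_simps)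
      then have "\<omega> \<in> H n" unfolding H_def using t ws by auto
      then show ?thesis by simp
    qed
  qed
  have PE: "prob (E n) \<le> r + (K\<^sup>2/\<gamma> + 2 * r) / \<epsilon>\<^sup>2" for n
  proof -
    have "prob (E n) \<le> prob (Aev n \<union> H n)" by (rule finite_measure_mono[OF sub]) simp
    also have "\<dots> \<le> prob (Aev n) + prob (H n)" by (rule measure_Un_le) simp_all
    finally show ?thesis using PA[of n] PH[of n] by linarith
  qed
  have Gset: "{\<omega> \<in> space M. (SUP t::nat. ereal (\<bar>\<Sum>s=1..t. X s \<omega>\<bar> / (\<gamma> + real t))) > ereal (\<epsilon> + tail_mass M (X 1) K)}
      = (\<Union>n. E n)"
  proof (intro set_eqI iffI)
    fix \<omega> assume "\<omega> \<in> {\<omega> \<in> space M. (SUP t::nat. ereal (\<bar>\<Sum>s=1..t. X s \<omega>\<bar> / (\<gamma> + real t))) > ereal (\<epsilon> + tail_mass M (X 1) K)}"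
    then have ws: "\<omega> \<in> space M" and "ereal (\<epsilon> + r) < (SUP t::nat. ereal (\<bar>\<Sum>s=1..t. X s \<omega>\<bar> / (\<gamma> + real t)))"
      by (auto simp: r_def)
    then obtain t where t: "\<epsilon> + r < \<bar>\<Sum>s=1..t. X s \<omega>\<bar> / (\<gamma> + real t)" by (auto simp: less_SUP_iff)
    have "t \<noteq> 0"
    proof
      assume "t = 0"
      with t have "\<epsilon> + r < 0" by simp
      with eps r0 show False by linarith
    qed
    then have t1: "t \<in> {1..t}" by simp
    have "(\<Sum>s=1..t. X s \<omega>) = (\<Sum>s=1..t. X' s \<omega>)" by (intro sum.cong) (auto simp: X'_def)
    then have "\<omega> \<in> E t" unfolding E_def using ws t t1 by auto
    then show "\<omega> \<in> (\<Union>n. E n)" by auto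
  next
    fix \<omega> assume "\<omega> \<in> (\<Union>n. E n)"
    then obtain n t where ws: "\<omega> \<in> space M" and "t \<in> {1..n}" and t: "\<epsilon> + r < \<bar>\<Sum>s=1..t. X' s \<omega>\<bar> / (\<gamma> + real t)"
      unfolding E_def by auto
    have "(\<Sum>s=1..t. X s \<omega>) = (\<Sum>s=1..t. X' s \<omega>)" by (intro sum.cong) (auto simp: X'_def)
    with t have "ereal (\<epsilon> + r) < ereal (\<bar>\<Sum>s=1..t. X s \<omega>\<bar> / (\<gamma> + real t))" by simp
    then have "ereal (\<epsilon> + r) < (SUP t::nat. ereal (\<bar>\<Sum>s=1..t. X s \<omega>\<bar> / (\<gamma> + real t)))"
      by (auto simp: less_SUP_iff)
    then show "\<omega> \<in> {\<omega> \<in> space M. (SUP t::nat. ereal (\<bar>\<Sum>s=1..t. X s \<omega>\<bar> / (\<gamma> + real t))) > ereal (\<epsilon> + tail_mass M (X 1) K)}"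
      using ws by (simp add: r_def)
  qed
  have inc: "incseq E" by (rule incseq_SucI) (auto simp: E_def)
  have lim: "(\<lambda>n. prob (E n)) \<longlonglongrightarrow> prob (\<Union>n. E n)"
    by (rule finite_Lim_measure_incseq[OF _ inc]) auto
  have Pall: "prob (\<Union>n. E n) \<le> r + (K\<^sup>2/\<gamma> + 2 * r) / \<epsilon>\<^sup>2"
    by (rule LIMSEQ_le_const2[OF lim]) (use PE in auto)
  have fin: "r + (K\<^sup>2/\<gamma> + 2 * r) / \<epsilon>\<^sup>2 \<le> 8 * K\<^sup>2 / (\<gamma> * \<epsilon>\<^sup>2) + (16 / \<epsilon>\<^sup>2 + 2) * r"
  proof -
    have e: "(K\<^sup>2/\<gamma> + 2 * r) / \<epsilon>\<^sup>2 = K\<^sup>2 / (\<gamma> * \<epsilon>\<^sup>2) + 2 * r / \<epsilon>\<^sup>2"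
      by (simp add: add_divide_distrib)
    have a: "0 \<le> K\<^sup>2 / (\<gamma> * \<epsilon>\<^sup>2)" using gam by simp
    have b: "2 * r / \<epsilon>\<^sup>2 \<le> 16 / \<epsilon>\<^sup>2 * r"
      using r0 eps by (simp add: divide_right_mono)
    have d: "8 * K\<^sup>2 / (\<gamma> * \<epsilon>\<^sup>2) = 8 * (K\<^sup>2 / (\<gamma> * \<epsilon>\<^sup>2))" by simp
    show ?thesis unfolding e d using a b r0 by (simp add: algebra_simps)
  qed
  show ?thesis unfolding Gset using Pall fin by (simp add: r_def)
qed

end
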